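(* Let $G$ be a non-empty finite simple graph and $\pi$ a clique vertex-partition of $G$, with $d=\#\pi$. Then for every $0\le i\le d$, $h_i(\mathrm{Ind}(G^\pi))=f_{i-1}(\mathrm{Ind}(G))$, where $f_{i-1}(\mathrm{Ind}(G))$ is the number of independent sets of size $i$ in $G$ (and is $0$ if there are none). That is, the $h$-vector of $\mathrm{Ind}(G^\pi)$ is the face vector of $\mathrm{Ind}(G)$ (padded with zeros).
   Context: $\mathrm{Ind}(G)$ is the simplicial complex whose faces are the independent sets of $G$. A clique vertex-partition of $G=(V,E)$ is a set $\pi=\{W_1,\ldots,W_t\}$ of pairwise disjoint (possibly empty) cliques of $G$ whose union is $V$; $G^\pi$ is the graph with vertex set $V\cup\{w_1,\ldots,w_t\}$ ($w_i$ new) and edge set $E\cup\{vw_i : v\in W_i\}$. For a $(d-1)$-dimensional simplicial complex $\Delta$, the face vector is $(f_{-1},\ldots,f_{d-1})$ with $f_i$ the number of faces of cardinality $i+1$ (so $f_{-1}=1$), and the $h$-vector is $(h_0,\ldots,h_d)$ with $h_j=\sum_{i=0}^{j}(-1)^{j-i}\binom{d-i}{j-i}f_{i-1}$. *)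

theory Defs
  imports Main
begin

text \<open>A finite simple graph: finite vertex set V, symmetric irreflexive edge relation E
  (only its restriction to V matters).\<close>
definition simple_graph :: "'a set \<Rightarrow> ('a \<Rightarrow> 'a \<Rightarrow> bool) \<Rightarrow> bool" where
  "simple_graph V E \<longleftrightarrow> finite V \<and> (\<forall>x\<in>V. \<forall>y\<in>V. E x y \<longleftrightarrow> E y x) \<and> (\<forall>x\<in>V. \<not> E x x)"

definition is_clique :: "'a set \<Rightarrow> ('a \<Rightarrow> 'a \<Rightarrow> bool) \<Rightarrow> 'a set \<Rightarrow> bool" where
  "is_clique V E W \<longleftrightarrow> W \<subseteq> V \<and> (\<forall>x\<in>W. \<forall>y\<in>W. x \<noteq> y \<longrightarrow> E x y)"

definition Ind :: "'a set \<Rightarrow> ('a \<Rightarrow> 'a \<Rightarrow> bool) \<Rightarrow> 'a set set" where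
  "Ind V E = {S. S \<subseteq> V \<and> (\<forall>x\<in>S. \<forall>y\<in>S. \<not> E x y)}"

text \<open>Clique vertex-partition W_0,...,W_{t-1} (possibly empty, pairwise disjoint cliques covering V).\<close>
definition clique_vertex_partition ::
  "'a set \<Rightarrow> ('a \<Rightarrow> 'a \<Rightarrow> bool) \<Rightarrow> nat \<Rightarrow> (nat \<Rightarrow> 'a set) \<Rightarrow> bool" where
  "clique_vertex_partition V E t W \<longleftrightarrow>
     (\<forall>i<t. is_clique V E (W i)) \<and>
     (\<forall>i<t. \<forall>j<t. i \<noteq> j \<longrightarrow> W i \<inter> W j = {}) \<and>
     (\<Union>i<t. W i) = V"

text \<open>The graph G^pi: old vertices Inl v, new vertices Inr i (= w_i).\<close>
definition pi_vertices :: "'a set \<Rightarrow> nat \<Rightarrow> ('a + nat) set" where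
  "pi_vertices V t = Inl ` V \<union> Inr ` {..<t}"

fun pi_edges :: "('a \<Rightarrow> 'a \<Rightarrow> bool) \<Rightarrow> (nat \<Rightarrow> 'a set) \<Rightarrow> ('a + nat) \<Rightarrow> ('a + nat) \<Rightarrow> bool" where
  "pi_edges E W (Inl u) (Inl v) = E u v"
| "pi_edges E W (Inl v) (Inr i) = (v \<in> W i)"
| "pi_edges E W (Inr i) (Inl v) = (v \<in> W i)"
| "pi_edges E W (Inr i) (Inr j) = False"

text \<open>f_{k-1}: number of faces of cardinality k.\<close>
definition face_num :: "'a set set \<Rightarrow> nat \<Rightarrow> nat" where
  "face_num \<Delta> k = card {F \<in> \<Delta>. card F = k}"

text \<open>d with Delta of dimension d-1: the maximal face cardinality.\<close>
definition cx_d :: "'a set set \<Rightarrow> nat" where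
  "cx_d \<Delta> = Max (card ` \<Delta>)"

definition h_vec :: "'a set set \<Rightarrow> nat \<Rightarrow> int" where
  "h_vec \<Delta> j = (\<Sum>i=0..j. (-1) ^ (j - i) * int ((cx_d \<Delta> - i) choose (j - i)) * int (face_num \<Delta> i))"

end

theory Submission
  imports Defs
begin

lemma alt_sum: "(\<Sum>l=0..n. (-1::int)^(n-l) * int (n choose l)) = (if n = 0 then 1 else 0)"
proof -
  have "(\<Sum>l\<le>n. of_nat (n choose l) * 1^l * (-1::int)^(n-l)) = (1 + (-1))^n"
    by (simp only: binomial_ring)
  then show ?thesis
    by (simp add: atLeast0AtMost mult.commute)
qed

lemma key_le:
  assumes "j \<le> i" "i \<le> t"
  shows "(\<Sum>k=0..i. (-1::int)^(i-k) * int ((t-k) choose (i-k)) *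
           (if j \<le> k then int ((t-j) choose (k-j)) else 0)) = (if j = i then 1 else 0)"
proof -
  let ?f = "\<lambda>k. (-1::int)^(i-k) * int ((t-k) choose (i-k)) *
           (if j \<le> k then int ((t-j) choose (k-j)) else 0)"
  have split: "{0..i} = {0..<j} \<union> {j..i}" using assms by auto
  have "sum ?f {0..i} = sum ?f {0..<j} + sum ?f {j..i}"
    unfolding split by (rule sum.union_disjoint) auto
  also have "sum ?f {0..<j} = 0" by (rule sum.neutral) auto
  also have "sum ?f {j..i} = (\<Sum>k=j..i. int ((t-j) choose (i-j)) * ((-1::int)^(i-k) * int ((i-j) choose (k-j))))"
  proof (rule sum.cong)
    fix k assume k: "k \<in> {j..i}"
    have "((t-j) choose (i-j)) * ((i-j) choose (k-j)) = ((t-j) choose (k-j)) * (((t-j) - (k-j)) choose ((i-j) - (k-j)))"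
      by (rule choose_mult) (use k assms in \<open>auto\<close>)
    moreover have "(t-j) - (k-j) = t - k" "(i-j) - (k-j) = i - k" using k assms by auto
    ultimately have "((t-j) choose (i-j)) * ((i-j) choose (k-j)) = ((t-k) choose (i-k)) * ((t-j) choose (k-j))"
      by simp
    then have "int ((t-j) choose (i-j)) * int ((i-j) choose (k-j)) = int ((t-k) choose (i-k)) * int ((t-j) choose (k-j))"
      by (metis of_nat_mult)
    then show "?f k = int ((t-j) choose (i-j)) * ((-1::int)^(i-k) * int ((i-j) choose (k-j)))"
      using k by (simp add: algebra_simps)
  qed simp
  also have "\<dots> = int ((t-j) choose (i-j)) * (\<Sum>k=j..i. (-1::int)^(i-k) * int ((i-j) choose (k-j)))"
    by (simp add: sum_distrib_left)
  also have "(\<Sum>k=j..i. (-1::int)^(i-k) * int ((i-j) choose (k-j))) = (\<Sum>l=0..i-j. (-1::int)^((i-j)-l) * int ((i-j) choose l))"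
  proof -
    have "(\<Sum>k=0+j..(i-j)+j. (-1::int)^(i-k) * int ((i-j) choose (k-j))) = (\<Sum>l=0..i-j. (-1::int)^(i-(l+j)) * int ((i-j) choose (l+j-j)))"
      by (rule sum.shift_bounds_cl_nat_ivl)
    moreover have "(\<Sum>l=0..i-j. (-1::int)^(i-(l+j)) * int ((i-j) choose (l+j-j))) = (\<Sum>l=0..i-j. (-1::int)^((i-j)-l) * int ((i-j) choose l))"
      by (rule sum.cong) (auto simp: add.commute)
    ultimately show ?thesis using assms by simp
  qed
  also have "\<dots> = (if i - j = 0 then 1 else 0)" by (rule alt_sum)
  finally show ?thesis using assms by auto
qed

lemma key_gt:
  assumes "i < j"
  shows "(\<Sum>k=0..i. (-1::int)^(i-k) * int ((t-k) choose (i-k)) *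
           (if j \<le> k then int ((t-j) choose (k-j)) else 0)) = 0"
  using assms by (intro sum.neutral) auto

lemma split_sum_set: "X = Inl ` (Inl -` X) \<union> Inr ` (Inr -` X)"
proof
  show "X \<subseteq> Inl ` (Inl -` X) \<union> Inr ` (Inr -` X)"
  proof
    fix x assume "x \<in> X" then show "x \<in> Inl ` (Inl -` X) \<union> Inr ` (Inr -` X)"
      by (cases x) auto
  qed
qed auto

lemma card_sum_set:
  assumes "finite S" "finite T"
  shows "card (Inl ` S \<union> Inr ` T) = card S + card T"
  using assms by (subst card_Un_disjoint) (auto simp: card_image)

theorem proposition3p5:
  fixes V :: "'a set" and E :: "'a \<Rightarrow> 'a \<Rightarrow> bool" and t :: nat and W :: "nat \<Rightarrow> 'a set"
  assumes "simple_graph V E" and "V \<noteq> {}"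
    and "clique_vertex_partition V E t W"
    and "i \<le> t"
  shows "h_vec (Ind (pi_vertices V t) (pi_edges E W)) i = int (face_num (Ind V E) i)"
proof -
  define IG where "IG = Ind V E"
  define F where "F = Ind (pi_vertices V t) (pi_edges E W)"
  define fr where "fr S = {j. j < t \<and> W j \<inter> S = {}}" for S
  have finV: "finite V" using assms(1) unfolding simple_graph_def by auto
  have irr: "\<And>x. x \<in> V \<Longrightarrow> \<not> E x x" using assms(1) unfolding simple_graph_def by auto
  have cl: "\<And>j. j < t \<Longrightarrow> is_clique V E (W j)"
   and disj: "\<And>j l. j < t \<Longrightarrow> l < t \<Longrightarrow> j \<noteq> l \<Longrightarrow> W j \<inter> W l = {}"
   and cov: "(\<Union>j<t. W j) = V"
    using assms(3) unfolding clique_vertex_partition_def by auto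
  have finIG: "finite IG" unfolding IG_def Ind_def
    by (rule finite_subset[of _ "Pow V"]) (use finV in auto)
  have IGsub: "\<And>S. S \<in> IG \<Longrightarrow> S \<subseteq> V" unfolding IG_def Ind_def by auto
  have finS: "\<And>S. S \<in> IG \<Longrightarrow> finite S" using IGsub finV finite_subset by blast
  have hit: "card {j. j < t \<and> W j \<inter> S \<noteq> {}} = card S" if S: "S \<in> IG" for S
  proof -
    define blk where "blk v = (THE j. j < t \<and> v \<in> W j)" for v
    have blk: "blk v < t \<and> v \<in> W (blk v)" if "v \<in> V" for v
    proof -
      obtain j where j: "j < t" "v \<in> W j" using cov \<open>v \<in> V\<close> by auto
      have uq: "l = j" if "l < t \<and> v \<in> W l" for l using disj[of l j] that j by blast
      have "blk v = j" unfolding blk_def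
        by (rule the_equality) (use j uq in blast)+
      then show ?thesis using j by simp
    qed
    have blk_eq: "blk v = j" if "v \<in> V" "j < t" "v \<in> W j" for v j
      using blk[OF that(1)] disj[of "blk v" j] that by blast
    have "bij_betw blk S {j. j < t \<and> W j \<inter> S \<noteq> {}}"
    proof (rule bij_betw_imageI)
      show "inj_on blk S"
      proof
        fix v w assume v: "v \<in> S" and w: "w \<in> S" and e: "blk v = blk w"
        have vV: "v \<in> V" and wV: "w \<in> V" using v w IGsub S by auto
        show "v = w"
        proof (rule ccontr)
          assume "v \<noteq> w"
          then have "E v w" using cl[of "blk v"] blk[OF vV] blk[OF wV] e unfolding is_clique_def by auto
          then show False using v w S unfolding IG_def Ind_def by auto
        qed
      qed
      show "blk ` S = {j. j < t \<and> W j \<inter> S \<noteq> {}}"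
      proof
        show "blk ` S \<subseteq> {j. j < t \<and> W j \<inter> S \<noteq> {}}"
          using blk IGsub[OF S] by blast
        show "{j. j < t \<and> W j \<inter> S \<noteq> {}} \<subseteq> blk ` S"
        proof
          fix j assume "j \<in> {j. j < t \<and> W j \<inter> S \<noteq> {}}"
          then obtain v where "j < t" "v \<in> W j" "v \<in> S" by auto
          then show "j \<in> blk ` S" using blk_eq IGsub[OF S] by (metis image_eqI subsetD)
        qed
      qed
    qed
    then show ?thesis by (simp add: bij_betw_same_card)
  qed
  have cardSt: "card S \<le> t" if "S \<in> IG" for S
  proof -
    have "card {j. j < t \<and> W j \<inter> S \<noteq> {}} \<le> card {..<t}" by (rule card_mono) auto
    then show ?thesis using hit[OF that] by simp
  qed
  have cardfr: "card (fr S) = t - card S" if "S \<in> IG" for S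
  proof -
    have "fr S = {..<t} - {j. j < t \<and> W j \<inter> S \<noteq> {}}" unfolding fr_def by auto
    moreover have "card ({..<t} - {j. j < t \<and> W j \<inter> S \<noteq> {}}) = card {..<t} - card {j. j < t \<and> W j \<inter> S \<noteq> {}}"
      by (rule card_Diff_subset) auto
    ultimately have "card (fr S) = card {..<t} - card {j. j < t \<and> W j \<inter> S \<noteq> {}}"
      by simp
    then show ?thesis using hit[OF that] by simp
  qed
  have finfr: "finite (fr S)" for S unfolding fr_def by auto
  have inF: "Inl ` S \<union> Inr ` T \<in> F" if "S \<in> IG" "T \<subseteq> fr S" for S T
  proof -
    have a: "S \<subseteq> V" "\<forall>x\<in>S. \<forall>y\<in>S. \<not> E x y" using that(1) unfolding IG_def Ind_def by auto
    have b: "T \<subseteq> {..<t}" "\<forall>j\<in>T. \<forall>v\<in>S. v \<notin> W j" using that(2) unfolding fr_def by auto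
    show ?thesis unfolding F_def Ind_def pi_vertices_def
    proof (intro CollectI conjI ballI)
      show "Inl ` S \<union> Inr ` T \<subseteq> Inl ` V \<union> Inr ` {..<t}" using a b by auto
      fix x y assume x: "x \<in> Inl ` S \<union> Inr ` T" and y: "y \<in> Inl ` S \<union> Inr ` T"
      show "\<not> pi_edges E W x y" using x y a b by auto
    qed
  qed
  have fromF: "Inl -` X \<in> IG \<and> Inr -` X \<subseteq> fr (Inl -` X)" if "X \<in> F" for X
  proof -
    have X: "X \<subseteq> Inl ` V \<union> Inr ` {..<t}" "\<forall>x\<in>X. \<forall>y\<in>X. \<not> pi_edges E W x y"
      using that unfolding F_def Ind_def pi_vertices_def by auto
    have "Inl -` X \<in> IG" unfolding IG_def Ind_def
    proof (intro CollectI conjI ballI)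
      show "Inl -` X \<subseteq> V" using X(1) by auto
      fix x y assume "x \<in> Inl -` X" "y \<in> Inl -` X"
      then show "\<not> E x y" using X(2) by (metis pi_edges.simps(1) vimageE)
    qed
    moreover have "Inr -` X \<subseteq> fr (Inl -` X)" unfolding fr_def
    proof
      fix j assume j: "j \<in> Inr -` X"
      have "j < t" using X(1) j by auto
      moreover have "W j \<inter> Inl -` X = {}"
      proof (rule ccontr)
        assume "W j \<inter> Inl -` X \<noteq> {}"
        then obtain v where "v \<in> W j" "Inl v \<in> X" by auto
        then show False using X(2) j by (metis pi_edges.simps(2) vimageE)
      qed
      ultimately show "j \<in> {j. j < t \<and> W j \<inter> Inl -` X = {}}" by simp
    qed
    ultimately show ?thesis by simp
  qed
  have finF: "finite F" unfolding F_def Ind_def pi_vertices_def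
    by (rule finite_subset[of _ "Pow (Inl ` V \<union> Inr ` {..<t})"]) (use finV in auto)
  have fnF: "int (face_num F k) = (\<Sum>S\<in>IG. if card S \<le> k then int ((t - card S) choose (k - card S)) else 0)" for k
  proof -
    define A where "A = {S \<in> IG. card S \<le> k}"
    define B where "B S = {T. T \<subseteq> fr S \<and> card T = k - card S}" for S
    define g where "g = (\<lambda>(S :: 'a set, T :: nat set). Inl ` S \<union> Inr ` T)"
    have img: "g ` Sigma A B = {X \<in> F. card X = k}"
    proof
      show "g ` Sigma A B \<subseteq> {X \<in> F. card X = k}"
      proof
        fix X assume "X \<in> g ` Sigma A B"
        then obtain S T where ST: "S \<in> A" "T \<in> B S" "X = Inl ` S \<union> Inr ` T" unfolding g_def by auto
        have "finite T" using ST(2) finfr finite_subset unfolding B_def by blast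
        moreover have "S \<in> IG" "card S \<le> k" "card T = k - card S" using ST unfolding A_def B_def by auto
        ultimately have "card X = k" using ST(3) finS card_sum_set[of S T] by simp
        moreover have "X \<in> F" using ST inF unfolding A_def B_def by auto
        ultimately show "X \<in> {X \<in> F. card X = k}" by simp
      qed
      show "{X \<in> F. card X = k} \<subseteq> g ` Sigma A B"
      proof
        fix X assume X: "X \<in> {X \<in> F. card X = k}"
        have h: "Inl -` X \<in> IG" "Inr -` X \<subseteq> fr (Inl -` X)" using fromF X by auto
        have "finite (Inr -` X)" using h(2) finfr finite_subset by blast
        then have c: "card X = card (Inl -` X) + card (Inr -` X)"
          using card_sum_set[of "Inl -` X" "Inr -` X"] finS[OF h(1)] split_sum_set[of X] by simp
        have "(Inl -` X, Inr -` X) \<in> Sigma A B" using h c X unfolding A_def B_def by auto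
        moreover have "X = g (Inl -` X, Inr -` X)" unfolding g_def using split_sum_set by simp
        ultimately show "X \<in> g ` Sigma A B" by blast
      qed
    qed
    have inj: "inj_on g (Sigma A B)"
    proof (rule inj_on_inverseI[where g="\<lambda>X. (Inl -` X, Inr -` X)"])
      fix p assume "p \<in> Sigma A B"
      show "(Inl -` g p, Inr -` g p) = p" by (cases p) (auto simp: g_def)
    qed
    have finA: "finite A" using finIG unfolding A_def by auto
    have finB: "\<And>S. finite (B S)" unfolding B_def
      by (rule finite_subset[of _ "Pow (fr _)"]) (use finfr in auto)
    have "face_num F k = card (Sigma A B)"
      unfolding face_num_def using img inj card_image by fastforce
    also have "\<dots> = (\<Sum>S\<in>A. card (B S))" using finA finB by (simp add: card_SigmaI)
    also have "\<dots> = (\<Sum>S\<in>A. (t - card S) choose (k - card S))"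
      by (rule sum.cong) (auto simp: B_def n_subsets finfr cardfr A_def)
    finally have "int (face_num F k) = (\<Sum>S\<in>A. int ((t - card S) choose (k - card S)))" by simp
    also have "\<dots> = (\<Sum>S\<in>IG. if card S \<le> k then int ((t - card S) choose (k - card S)) else 0)"
      unfolding A_def using finIG by (simp add: sum.inter_filter)
    finally show ?thesis .
  qed
  have cxd: "cx_d F = t" unfolding cx_d_def
  proof (rule Max_eqI)
    show "finite (card ` F)" using finF by simp
    show "t \<in> card ` F"
    proof
      have "{} \<in> IG" unfolding IG_def Ind_def by auto
      moreover have "{..<t} \<subseteq> fr {}" unfolding fr_def by auto
      ultimately have "Inl ` {} \<union> Inr ` {..<t} \<in> F" by (rule inF)
      then show "Inr ` {..<t} \<in> F" by simp
      show "t = card (Inr ` {..<t})" by (simp add: card_image)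
    qed
    fix y assume "y \<in> card ` F"
    then obtain X where X: "X \<in> F" "y = card X" by auto
    have h: "Inl -` X \<in> IG" "Inr -` X \<subseteq> fr (Inl -` X)" using fromF X by auto
    have "card (Inr -` X) \<le> card (fr (Inl -` X))" using h(2) finfr card_mono by blast
    moreover have "finite (Inr -` X)" using h(2) finfr finite_subset by blast
    ultimately show "y \<le> t"
      using X card_sum_set[of "Inl -` X" "Inr -` X"] finS[OF h(1)] split_sum_set[of X]
        cardfr[OF h(1)] cardSt[OF h(1)] by simp
  qed
  have "h_vec F i = (\<Sum>k=0..i. (-1) ^ (i - k) * int ((t - k) choose (i - k)) *
          (\<Sum>S\<in>IG. if card S \<le> k then int ((t - card S) choose (k - card S)) else 0))"
    unfolding h_vec_def cxd fnF ..
  also have "\<dots> = (\<Sum>k=0..i. \<Sum>S\<in>IG. (-1) ^ (i - k) * int ((t - k) choose (i - k)) *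
          (if card S \<le> k then int ((t - card S) choose (k - card S)) else 0))"
    by (simp add: sum_distrib_left)
  also have "\<dots> = (\<Sum>S\<in>IG. \<Sum>k=0..i. (-1) ^ (i - k) * int ((t - k) choose (i - k)) *
          (if card S \<le> k then int ((t - card S) choose (k - card S)) else 0))"
    by (rule sum.swap)
  also have "\<dots> = (\<Sum>S\<in>IG. if card S = i then 1 else 0)"
  proof (rule sum.cong)
    fix S assume S: "S \<in> IG"
    show "(\<Sum>k=0..i. (-1) ^ (i - k) * int ((t - k) choose (i - k)) *
          (if card S \<le> k then int ((t - card S) choose (k - card S)) else 0)) = (if card S = i then 1 else 0)"
    proof (cases "card S \<le> i")
      case True
      then show ?thesis using key_le[OF True assms(4)] by simp
    next
      case False
      then show ?thesis using key_gt[of i "card S" t] by simp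
    qed
  qed simp
  also have "\<dots> = int (card {S \<in> IG. card S = i})"
    using sum.inter_filter[OF finIG, of "\<lambda>_. 1::int" "\<lambda>S. card S = i"] by simp
  finally show ?thesis unfolding F_def IG_def face_num_def .
qed

end
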